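(* Let $(X,|\cdot|)$ be a Banach space which is uniformly convex of type $p\geqslant 2$, i.e. there is $c>0$ with $\delta_X(\varepsilon)\geqslant c\,\varepsilon^p$ for all $\varepsilon\in(0,2]$. Let $Y$ be the tree with four vertices $a_0,a_1,a_2,a_2'$ and edges $a_0a_1$, $a_1a_2$, $a_1a_2'$, equipped with its graph (shortest-path) metric $d$. Then there is a constant $K=K(X)>0$ such that for every $D>0$ and every map $\varphi:Y\to X$ that is $D$-Lipschitz (i.e. $|\varphi(x)-\varphi(y)|\leqslant D\,d(x,y)$ for all $x,y\in Y$) and distance non-decreasing (i.e. $|\varphi(x)-\varphi(y)|\geqslant d(x,y)$ for all $x,y\in Y$), either \[|\varphi(a_0)-\varphi(a_2)|\leqslant 2\Big(D-\frac{K}{D^{p-1}}\Big)\] or \[|\varphi(a_0)-\varphi(a_2')|\leqslant 2\Big(D-\frac{K}{D^{p-1}}\Big).\]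
   Context: The modulus of (uniform) convexity of a Banach space $X$ with norm $|\cdot|$ is, for $\varepsilon\in(0,2]$, \[\delta_X(\varepsilon)=\inf\left\{1-\left|\tfrac{x+y}{2}\right| \;:\; |x|=|y|=1,\ |x-y|\geqslant\varepsilon\right\}.\] $X$ is called uniformly convex of type $p\geqslant 2$ if $\delta_X(\varepsilon)\geqslant c\,\varepsilon^p$ for some constant $c>0$ and all $\varepsilon\in(0,2]$. In the tree $Y$, $a_0$ is the root, $a_1$ its unique child, and $a_2,a_2'$ the two children of $a_1$. *)

theory Defs
  imports "HOL-Analysis.Analysis"
begin

definition modulus_convexity :: "('a::real_normed_vector) itself \<Rightarrow> real \<Rightarrow> real" where
  "modulus_convexity TYPE('a) \<epsilon> =
     Inf {1 - norm ((x + y) /\<^sub>R 2) | x y :: 'a. norm x = 1 \<and> norm y = 1 \<and> norm (x - y) \<ge> \<epsilon>}"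

definition unif_convex_type :: "('a::real_normed_vector) itself \<Rightarrow> real \<Rightarrow> bool" where
  "unif_convex_type T p \<longleftrightarrow> p \<ge> 2 \<and>
     (\<exists>c>0. \<forall>\<epsilon>. 0 < \<epsilon> \<and> \<epsilon> \<le> 2 \<longrightarrow> modulus_convexity T \<epsilon> \<ge> c * \<epsilon> powr p)"

datatype Yvert = A0 | A1 | A2 | A2'

fun ydepth :: "Yvert \<Rightarrow> nat" where
  "ydepth A0 = 0" | "ydepth A1 = 1" | "ydepth A2 = 2" | "ydepth A2' = 2"

fun ydist :: "Yvert \<Rightarrow> Yvert \<Rightarrow> real" where
  "ydist A2 A2' = 2"
| "ydist A2' A2 = 2"
| "ydist x y = \<bar>real (ydepth x) - real (ydepth y)\<bar>"

end

theory Submission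
  imports Defs
begin

lemma mod_lower:
  fixes x y :: "'a::real_normed_vector"
  assumes "norm x = 1" "norm y = 1" "norm (x-y) \<ge> e"
  shows "modulus_convexity TYPE('a) e \<le> 1 - norm ((x+y) /\<^sub>R 2)"
  unfolding modulus_convexity_def
proof (rule cInf_lower)
  show "1 - norm ((x + y) /\<^sub>R 2) \<in> {1 - norm ((x + y) /\<^sub>R 2) |x y::'a. norm x = 1 \<and> norm y = 1 \<and> e \<le> norm (x - y)}"
    using assms by blast
  show "bdd_below {1 - norm ((x + y) /\<^sub>R 2) |x y::'a. norm x = 1 \<and> norm y = 1 \<and> e \<le> norm (x - y)}"
  proof (rule bdd_belowI[of _ 0], clarify)
    fix a b :: 'a assume "norm a = 1" "norm b = 1"
    then have "norm (a+b) \<le> 2" using norm_triangle_ineq[of a b] by simp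
    then show "0 \<le> 1 - norm ((a + b) /\<^sub>R 2)" by simp
  qed
qed

lemma plus_bound:
  fixes u v :: "'a::real_normed_vector"
  assumes "u \<noteq> 0" "v \<noteq> 0" "0 \<le> D" "\<bar>s\<bar> = 1"
  shows "norm (u + s *\<^sub>R v) \<le> D * norm (u /\<^sub>R norm u + s *\<^sub>R (v /\<^sub>R norm v)) + \<bar>D - norm u\<bar> + \<bar>D - norm v\<bar>"
proof -
  define x where "x = u /\<^sub>R norm u"
  define y where "y = s *\<^sub>R (v /\<^sub>R norm v)"
  have nx: "norm x = 1" "norm y = 1" using assms by (auto simp add: x_def y_def abs_mult)
  have ux: "u = norm u *\<^sub>R x" using assms(1) by (simp add: x_def)
  have vy: "s *\<^sub>R v = norm v *\<^sub>R y" using assms(2) by (simp add: y_def)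
  have "D *\<^sub>R (x + y) - (D - norm u) *\<^sub>R x - (D - norm v) *\<^sub>R y = norm u *\<^sub>R x + norm v *\<^sub>R y"
    by (simp add: algebra_simps)
  then have eq: "u + s *\<^sub>R v = D *\<^sub>R (x + y) - (D - norm u) *\<^sub>R x - (D - norm v) *\<^sub>R y"
    using ux vy by simp
  have "norm (D *\<^sub>R (x + y) - (D - norm u) *\<^sub>R x - (D - norm v) *\<^sub>R y)
      \<le> norm (D *\<^sub>R (x + y) - (D - norm u) *\<^sub>R x) + norm ((D - norm v) *\<^sub>R y)"
    by (rule norm_triangle_ineq4)
  also have "\<dots> \<le> norm (D *\<^sub>R (x + y)) + norm ((D - norm u) *\<^sub>R x) + norm ((D - norm v) *\<^sub>R y)"
    using norm_triangle_ineq4[of "D *\<^sub>R (x + y)" "(D - norm u) *\<^sub>R x"] by simp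
  also have "\<dots> = D * norm (x + y) + \<bar>D - norm u\<bar> + \<bar>D - norm v\<bar>"
    using nx assms(3) by simp
  finally show ?thesis using eq unfolding x_def y_def by simp
qed

theorem lemma1:
  fixes p :: real
  assumes "unif_convex_type TYPE('a::banach) p"
  shows "\<exists>K>0. \<forall>D>0. \<forall>\<phi> :: Yvert \<Rightarrow> 'a.
           (\<forall>x y. norm (\<phi> x - \<phi> y) \<le> D * ydist x y) \<and>
           (\<forall>x y. norm (\<phi> x - \<phi> y) \<ge> ydist x y) \<longrightarrow>
           norm (\<phi> A0 - \<phi> A2) \<le> 2 * (D - K / D powr (p - 1)) \<or>
           norm (\<phi> A0 - \<phi> A2') \<le> 2 * (D - K / D powr (p - 1))"
proof -
  from assms obtain c where p2: "p \<ge> 2" and c0: "c > 0"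
    and hc: "\<And>e. 0 < e \<Longrightarrow> e \<le> 2 \<Longrightarrow> modulus_convexity TYPE('a) e \<ge> c * e powr p"
    unfolding unif_convex_type_def by blast
  define K where "K = min (1/4) (c / 2 powr p / 3)"
  have K0: "K > 0" using c0 by (simp add: K_def)
  have K1: "K \<le> 1/4" and K2: "3 * K \<le> c / 2 powr p" by (auto simp: K_def)
  show ?thesis
  proof (intro exI[of _ K] conjI K0 allI impI)
    fix D :: real and \<phi> :: "Yvert \<Rightarrow> 'a"
    assume D0: "D > 0" and H: "(\<forall>x y. norm (\<phi> x - \<phi> y) \<le> D * ydist x y) \<and>
           (\<forall>x y. norm (\<phi> x - \<phi> y) \<ge> ydist x y)"
    define \<eta> where "\<eta> = K / D powr (p - 1)"
    show "norm (\<phi> A0 - \<phi> A2) \<le> 2 * (D - \<eta>) \<or> norm (\<phi> A0 - \<phi> A2') \<le> 2 * (D - \<eta>)"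
      unfolding \<eta>_def[symmetric]
    proof (rule ccontr)
      assume "\<not> ?thesis"
      then have h1: "norm (\<phi> A0 - \<phi> A2) > 2 * D - 2 * \<eta>"
        and h2: "norm (\<phi> A0 - \<phi> A2') > 2 * D - 2 * \<eta>" by auto
      define u where "u = \<phi> A1 - \<phi> A0"
      define v where "v = \<phi> A2 - \<phi> A1"
      define w where "w = \<phi> A2' - \<phi> A1"
      have L: "\<And>x y. norm (\<phi> x - \<phi> y) \<le> D * ydist x y" and N: "\<And>x y. norm (\<phi> x - \<phi> y) \<ge> ydist x y"
        using H by auto
      have u1: "1 \<le> norm u" "norm u \<le> D" using L[of A1 A0] N[of A1 A0] unfolding u_def by simp_all
      have v1: "1 \<le> norm v" "norm v \<le> D" using L[of A2 A1] N[of A2 A1] unfolding v_def by simp_all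
      have w1: "1 \<le> norm w" "norm w \<le> D" using L[of A2' A1] N[of A2' A1] unfolding w_def by simp_all
      have vw: "2 \<le> norm (v - w)" using N[of A2 A2'] unfolding v_def w_def by simp
      have D1: "1 \<le> D" using u1 by simp
      have e1: "norm (u + v) > 2 * D - 2 * \<eta>"
      proof -
        have "\<phi> A0 - \<phi> A2 = - (u + v)" by (simp add: u_def v_def)
        then show ?thesis using h1 by (metis norm_minus_cancel)
      qed
      have e2: "norm (u + w) > 2 * D - 2 * \<eta>"
      proof -
        have "\<phi> A0 - \<phi> A2' = - (u + w)" by (simp add: u_def w_def)
        then show ?thesis using h2 by (metis norm_minus_cancel)
      qed
      have Dp: "D powr (p - 1) \<ge> 1" using D1 p2 by (intro ge_one_powr_ge_zero) auto
      have eta0: "0 \<le> \<eta>" using K0 D0 by (simp add: \<eta>_def)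
      have eta1: "\<eta> \<le> 1/4"
      proof -
        have "\<eta> \<le> K" unfolding \<eta>_def using K0 Dp by (simp add: divide_le_eq mult_le_cancel_left1)
        then show ?thesis using K1 by simp
      qed
      have nu: "norm u > D - 2 * \<eta>" "norm v > D - 2 * \<eta>" "norm w > D - 2 * \<eta>"
        using e1 e2 norm_triangle_ineq[of u v] norm_triangle_ineq[of u w] u1 v1 w1 by linarith+
      have nz: "u \<noteq> 0" "v \<noteq> 0" "w \<noteq> 0" using u1 v1 w1 by auto
      define x where "x = u /\<^sub>R norm u"
      define y where "y = v /\<^sub>R norm v"
      define z where "z = w /\<^sub>R norm w"
      have nx: "norm x = 1" "norm y = 1" "norm z = 1" using nz by (auto simp: x_def y_def z_def)
      have b1: "norm (u + v) \<le> D * norm (x + y) + \<bar>D - norm u\<bar> + \<bar>D - norm v\<bar>"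
        using plus_bound[OF nz(1) nz(2), of D 1] D0 by (simp add: x_def y_def)
      have b2: "norm (u + w) \<le> D * norm (x + z) + \<bar>D - norm u\<bar> + \<bar>D - norm w\<bar>"
        using plus_bound[OF nz(1) nz(3), of D 1] D0 by (simp add: x_def z_def)
      have b3: "norm (v - w) \<le> D * norm (y - z) + \<bar>D - norm v\<bar> + \<bar>D - norm w\<bar>"
        using plus_bound[OF nz(2) nz(3), of D "-1"] D0 by (simp add: y_def z_def)
      have ab: "\<bar>D - norm u\<bar> = D - norm u" "\<bar>D - norm v\<bar> = D - norm v" "\<bar>D - norm w\<bar> = D - norm w"
        using u1 v1 w1 by auto
      have xy: "D * norm (x + y) > 2 * D - 6 * \<eta>" using b1 e1 nu u1 v1 ab by linarith
      have xz: "D * norm (x + z) > 2 * D - 6 * \<eta>" using b2 e2 nu u1 w1 ab by linarith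
      have yz: "D * norm (y - z) \<ge> 2 - 4 * \<eta>" using b3 vw nu v1 w1 ab by linarith
      have tri: "norm (y - z) \<le> norm (x - y) + norm (x - z)"
      proof -
        have "y - z = (x - z) - (x - y)" by simp
        then show ?thesis using norm_triangle_ineq4[of "x - z" "x - y"] by simp
      qed
      define e where "e = (1 - 2 * \<eta>) / D"
      have De: "D * e = 1 - 2 * \<eta>" using D0 by (simp add: e_def)
      have e0: "0 < e" using eta1 D0 by (simp add: e_def)
      have e2': "e \<le> 2"
      proof -
        have "D * e \<le> D * 2" using De eta0 D1 by simp
        then show ?thesis using D0 by simp
      qed
      have "\<exists>t. norm t = 1 \<and> norm (x - t) \<ge> e \<and> D * norm (x + t) > 2 * D - 6 * \<eta>"
      proof (cases "norm (x - y) \<ge> e")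
        case True then show ?thesis using nx xy by blast
      next
        case False
        have "D * norm (y - z) \<le> D * norm (x - y) + D * norm (x - z)"
          using tri D0 by (simp add: distrib_left[symmetric])
        moreover have "D * norm (x - y) < D * e" using False D0 by simp
        ultimately have "D * e \<le> D * norm (x - z)" using yz De by linarith
        then have "e \<le> norm (x - z)" using D0 by simp
        then show ?thesis using nx xz by blast
      qed
      then obtain t where t1: "norm t = 1" and t2: "norm (x - t) \<ge> e" and t3: "D * norm (x + t) > 2 * D - 6 * \<eta>"
        by blast
      have "c * e powr p \<le> 1 - norm ((x + t) /\<^sub>R 2)"
        using hc[OF e0 e2'] mod_lower[OF nx(1) t1 t2] by linarith
      also have "\<dots> = 1 - norm (x + t) / 2" by simp
      also have "\<dots> < 3 * \<eta> / D"
      proof -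
        have "norm (x + t) > (2 * D - 6 * \<eta>) / D" using t3 D0 by (simp add: divide_less_eq mult.commute)
        also have "(2 * D - 6 * \<eta>) / D = 2 - 6 * \<eta> / D" using D0 by (simp add: field_simps)
        finally show ?thesis by simp
      qed
      finally have ineq: "c * e powr p < 3 * \<eta> / D" .
      have eh: "e \<ge> 1 / (2 * D)" using eta1 D0 by (simp add: e_def divide_simps)
      have "(1 / (2 * D)) powr p \<le> e powr p" using eh D0 p2 by (intro powr_mono2) auto
      moreover have "(1 / (2 * D)) powr p = 1 / (2 powr p * D powr p)"
        using D0 by (simp add: powr_divide powr_mult)
      ultimately have lo: "c / (2 powr p * D powr p) \<le> c * e powr p" using c0
        by (metis mult_left_mono less_le times_divide_eq_right mult_1_right)
      have Dpp: "D powr (p - 1) * D = D powr p" using D0 by (simp add: powr_diff)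
      have "3 * \<eta> / D = 3 * K / D powr p" unfolding \<eta>_def using Dpp D0 by (simp add: field_simps)
      then have "c / (2 powr p * D powr p) < 3 * K / D powr p" using lo ineq by linarith
      then have "c / 2 powr p < 3 * K" using D0 by (simp add: divide_simps split: if_splits)
      then show False using K2 by linarith
    qed
  qed
qed

end
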